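(* Let $m\ge n$, $B\in\mathbb R^{n\times m}$ of full row rank, $f,h$ convex and continuously differentiable with Lipschitz gradients, $\mathcal L(u,p)=f(u)-h(p)+(Bu,p)$ with saddle point $(u^*,p^* )$, and $T_{\mathcal U},\mathcal I_{\mathcal V}$ ($m\times m$), $T_{\mathcal P},\mathcal I_{\mathcal Q}$ ($n\times n$) symmetric positive definite. Suppose $h\in\mathcal S^{1,1}_{\mu_{h,T_{\mathcal P}},L_{h,T_{\mathcal P}}}$ w.r.t. $T_{\mathcal P}$ with $L_{h,T_{\mathcal P}}\le1$, $f\in\mathcal S^{1,1}_{\mu_{f,T_{\mathcal U}},L_{f,T_{\mathcal U}}}$ w.r.t. $T_{\mathcal U}$ with $L_{f,T_{\mathcal U}}\le1$, $f_B$ is strongly convex w.r.t. $\mathcal I_{\mathcal V}$ with $\mu_{f_B,\mathcal I_{\mathcal V}}>0$, and $h_B$ is strongly convex w.r.t. $\mathcal I_{\mathcal Q}$ with $\mu_{h_B,\mathcal I_{\mathcal Q}}>0$. Let $(u_k,p_k)$ be generated from $(u_0,p_0)$ by $$u_{k+1/2}=u_k-T_{\mathcal U}^{-1}(\nabla f(u_k)+B^\top p_k),\quad p_{k+1}=p_k-\alpha_k\mathcal I_{\mathcal Q}^{-1}(\nabla h(p_k)-Bu_{k+1/2}),\quad u_{k+1}=\arg\min_{u\in\mathbb R^m}\tilde f_B(u;u_k,p_{k+1}),$$ where $\tilde f_B(u;u_k,p_{k+1})=f_B(u)+\frac1{2\alpha_k}\|u-u_k+\alpha_k\mathcal I_{\mathcal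 V}^{-1}B^\top(p_{k+1}-T_{\mathcal P}^{-1}\nabla h(p_{k+1}))\|^2_{\mathcal I_{\mathcal V}}$. Then for $0<\alpha_k<\mu_{h_B,\mathcal I_{\mathcal Q}}/L_{S,\mathcal Q}^2$, $$\mathcal E(u_{k+1},p_{k+1})\le\frac1{1+\alpha_k\mu_k}\mathcal E(u_k,p_k),\qquad \mu_k=\min\{\mu_{f_B,\mathcal I_{\mathcal V}},\ \mu_{h_B,\mathcal I_{\mathcal Q}}-\alpha_kL_{S,\mathcal Q}^2\},$$ where $L_{S,\mathcal Q}^2=L_{h_B,\mathcal I_{\mathcal Q}}^2+L_{e_{\mathcal U},\mathcal I_{\mathcal V}}^2L_S^2$. In particular, for $\alpha_k=0.5\mu_{h_B,\mathcal I_{\mathcal Q}}/L_{S,\mathcal Q}^2$, $$\mathcal E(u_{k+1},p_{k+1})\le\frac{1}{1+0.5\,\mu_{h_B,\mathcal I_{\mathcal Q}}\min\{\mu_{f_B,\mathcal I_{\mathcal V}},\mu_{h_B,\mathcal I_{\mathcal Q}}/2\}/L_{S,\mathcal Q}^2}\mathcal E(u_k,p_k).$$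
   Context: A saddle point satisfies $\nabla f(u^* )+B^\top p^*=0$, $Bu^*=\nabla h(p^* )$. For SPD $M$, $\|x\|_M=(Mx,x)^{1/2}$; $D_g(y,x)=g(y)-g(x)-(\nabla g(x),y-x)$; $g\in\mathcal S^{1,1}_{\mu_{g,M},L_{g,M}}$ w.r.t. $M$ means $\frac{\mu_{g,M}}2\|x-y\|_M^2\le D_g(y,x)\le\frac{L_{g,M}}2\|x-y\|_M^2$ for all $x,y$. Define $f_B(u)=f(u)+\frac12(B^\top T_{\mathcal P}^{-1}Bu,u)$, $h_B(p)=h(p)+\frac12(BT_{\mathcal U}^{-1}B^\top p,p)$, $e_{\mathcal U}(u)=u-T_{\mathcal U}^{-1}\nabla f(u)$, $\mathcal E(u,p)=\frac12\|u-u^*\|^2_{\mathcal I_{\mathcal V}}+\frac12\|p-p^*\|^2_{\mathcal I_{\mathcal Q}}$. $L_{h_B,\mathcal I_{\mathcal Q}}$ is the Lipschitz constant of $\nabla h_B$ ($\|\nabla h_B(p_1)-\nabla h_B(p_2)\|_{\mathcal I_{\mathcal Q}^{-1}}\le L_{h_B,\mathcal I_{\mathcal Q}}\|p_1-p_2\|_{\mathcal I_{\mathcal Q}}$), $L_{e_{\mathcal U},\mathcal I_{\mathcal V}}$ the Lipschitz constant of $e_{\mathcal U}$ in $\|\cdot\|_{\mathcal I_{\mathcal V}}$, and $L_S^2=\lambda_{\max}(\mathcal I_{\mathcal Q}^{-1}B\mathcal I_{\mathcal V}^{-1}B^\top)$. *)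

theory Defs
  imports "HOL-Analysis.Analysis"
begin

definition mnorm2 :: "real^'m^'m \<Rightarrow> real^'m \<Rightarrow> real" where
  "mnorm2 M x = (M *v x) \<bullet> x"

definition spd :: "real^'m^'m \<Rightarrow> bool" where
  "spd M \<longleftrightarrow> transpose M = M \<and> (\<forall>x. x \<noteq> 0 \<longrightarrow> (M *v x) \<bullet> x > 0)"

definition bregman :: "(real^'m \<Rightarrow> real) \<Rightarrow> (real^'m \<Rightarrow> real^'m) \<Rightarrow> real^'m \<Rightarrow> real^'m \<Rightarrow> real" where
  "bregman g gg y x = g y - g x - gg x \<bullet> (y - x)"

definition S11 :: "(real^'m \<Rightarrow> real) \<Rightarrow> (real^'m \<Rightarrow> real^'m) \<Rightarrow> real^'m^'m \<Rightarrow> real \<Rightarrow> real \<Rightarrow> bool" where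
  "S11 g gg M mu L \<longleftrightarrow> (\<forall>x y. mu / 2 * mnorm2 M (x - y) \<le> bregman g gg y x
                              \<and> bregman g gg y x \<le> L / 2 * mnorm2 M (x - y))"

definition strongly_convex_wrt :: "real^'m^'m \<Rightarrow> real \<Rightarrow> (real^'m \<Rightarrow> real) \<Rightarrow> bool" where
  "strongly_convex_wrt M mu g \<longleftrightarrow> convex_on UNIV (\<lambda>x. g x - mu / 2 * mnorm2 M x)"

definition lambda_max :: "real^'n^'n \<Rightarrow> real" where
  "lambda_max A = Max {c. \<exists>v. v \<noteq> 0 \<and> A *v v = c *s v}"

end

theory Submission
  imports Defs
begin

lemma dot_transpose: "((A::real^'m^'n) *v x) \<bullet> y = x \<bullet> (transpose A *v y)"
  by (metis dot_lmul_matrix vector_transpose_matrix)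

lemma sym_dot: "transpose M = M \<Longrightarrow> ((M::real^'n^'n) *v x) \<bullet> y = x \<bullet> (M *v y)"
  by (metis dot_transpose)

lemma spd_inj: "spd M \<Longrightarrow> M *v x = 0 \<Longrightarrow> x = (0::real^'n)"
  unfolding spd_def by (metis inner_zero_left less_irrefl)

lemma spd_invertible: "spd (M::real^'n^'n) \<Longrightarrow> invertible M"
  using spd_inj matrix_left_invertible_ker invertible_left_inverse by metis

lemma inv_props: assumes "invertible (M::real^'n^'n)"
  shows "M ** matrix_inv M = mat 1" "matrix_inv M ** M = mat 1"
proof -
  have "\<exists>A'. M ** A' = mat 1 \<and> A' ** M = mat 1" using assms invertible_def by blast
  from someI_ex[OF this] show "M ** matrix_inv M = mat 1" "matrix_inv M ** M = mat 1"
    unfolding matrix_inv_def by auto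
qed

lemma inv_mv: assumes "invertible (M::real^'n^'n)"
  shows "M *v (matrix_inv M *v x) = x" "matrix_inv M *v (M *v x) = x"
  using inv_props[OF assms] by (simp_all add: matrix_vector_mul_assoc)

lemma transpose_inv: assumes "invertible (M::real^'n^'n)"
  shows "transpose (matrix_inv M) = matrix_inv (transpose M)"
proof -
  have ti: "invertible (transpose M)" using assms by (simp add: transpose_invertible)
  have "transpose (matrix_inv M) ** transpose M = mat 1"
    by (metis inv_props(1)[OF assms] matrix_transpose_mul transpose_mat)
  then have "transpose (matrix_inv M) ** transpose M ** matrix_inv (transpose M) = matrix_inv (transpose M)"
    by (simp add: matrix_mul_lid)
  then show ?thesis using inv_props(1)[OF ti] by (simp add: matrix_mul_assoc[symmetric] matrix_mul_rid)
qed

lemma spd_inv: assumes "spd (M::real^'n^'n)" shows "spd (matrix_inv M)"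
proof -
  have inv: "invertible M" using assms spd_invertible by blast
  have sym: "transpose M = M" using assms spd_def by blast
  have "transpose (matrix_inv M) = matrix_inv M" using transpose_inv[OF inv] sym by simp
  moreover have "(matrix_inv M *v x) \<bullet> x > 0" if "x \<noteq> 0" for x
  proof -
    let ?y = "matrix_inv M *v x"
    have "?y \<noteq> 0" using that inv_mv[OF inv] by (metis matrix_vector_mult_0_right)
    then have "(M *v ?y) \<bullet> ?y > 0" using assms spd_def by blast
    then show ?thesis using inv_mv[OF inv] by (simp add: inner_commute)
  qed
  ultimately show ?thesis unfolding spd_def by blast
qed

lemma spd_nonneg: "spd M \<Longrightarrow> 0 \<le> mnorm2 M x"
  unfolding spd_def mnorm2_def by (cases "x = 0") (auto intro: less_imp_le)

lemma quad_young:
  assumes sym: "transpose M = M" and psd: "\<And>x. 0 \<le> ((M::real^'n^'n) *v x) \<bullet> x"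
  shows "2 * ((M *v a) \<bullet> b) \<le> (M *v a) \<bullet> a + (M *v b) \<bullet> b"
proof -
  have "0 \<le> (M *v (a - b)) \<bullet> (a - b)" using psd by blast
  also have "\<dots> = (M *v a) \<bullet> a + (M *v b) \<bullet> b - (M *v a) \<bullet> b - (M *v b) \<bullet> a"
    by (simp add: matrix_vector_mult_diff_distrib inner_diff_left inner_diff_right)
  also have "(M *v b) \<bullet> a = (M *v a) \<bullet> b" using sym_dot[OF sym] by (metis inner_commute)
  finally show ?thesis by simp
qed

lemma real_disc:
  fixes X Y Z :: real
  assumes "\<And>s. 0 \<le> s^2 * X - 2 * s * Y + Z" "0 \<le> X"
  shows "Y^2 \<le> X * Z"
proof (cases "X = 0")
  case True
  show ?thesis
  proof (cases "Y = 0")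
    case False
    have "0 \<le> ((Z+1)/(2*Y))^2 * X - 2 * ((Z+1)/(2*Y)) * Y + Z" by (rule assms(1))
    with True False show ?thesis by (simp add: field_simps)
  qed (simp add: True)
next
  case False
  then have Xp: "X > 0" using assms(2) by simp
  have "0 \<le> (Y/X)^2 * X - 2 * (Y/X) * Y + Z" by (rule assms(1))
  then have "0 \<le> X * ((Y/X)^2 * X - 2 * (Y/X) * Y + Z)" using Xp by simp
  also have "\<dots> = X * Z - Y^2" using Xp by (simp add: field_simps power2_eq_square)
  finally show ?thesis by simp
qed

lemma quad_cs:
  assumes sym: "transpose M = M" and psd: "\<And>x. 0 \<le> ((M::real^'n^'n) *v x) \<bullet> x"
  shows "((M *v a) \<bullet> b)^2 \<le> ((M *v a) \<bullet> a) * ((M *v b) \<bullet> b)"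
proof (rule real_disc)
  fix s :: real
  have "0 \<le> (M *v (s *\<^sub>R a - b)) \<bullet> (s *\<^sub>R a - b)" using psd by blast
  also have "\<dots> = s^2 * ((M *v a) \<bullet> a) - s * ((M *v a) \<bullet> b) - s * ((M *v b) \<bullet> a) + (M *v b) \<bullet> b"
    by (simp add: matrix_vector_mult_diff_distrib matrix_vector_mult_scaleR inner_diff_left inner_diff_right power2_eq_square algebra_simps)
  also have "(M *v b) \<bullet> a = (M *v a) \<bullet> b" using sym_dot[OF sym] by (metis inner_commute)
  finally show "0 \<le> s\<^sup>2 * ((M *v a) \<bullet> a) - 2 * s * ((M *v a) \<bullet> b) + (M *v b) \<bullet> b" by simp
qed (rule psd)

lemma psd_zero:
  assumes sym: "transpose M = M" and psd: "\<And>x. 0 \<le> ((M::real^'n^'n) *v x) \<bullet> x"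
    and z: "(M *v x0) \<bullet> x0 = 0"
  shows "M *v x0 = 0"
proof -
  have "((M *v x0) \<bullet> (M *v x0))^2 \<le> ((M *v x0) \<bullet> x0) * ((M *v (M *v x0)) \<bullet> (M *v x0))"
    by (rule quad_cs[OF sym psd])
  with z have "((M *v x0) \<bullet> (M *v x0))^2 \<le> 0" by simp
  then show ?thesis by simp
qed

lemma quad_deriv:
  assumes sym: "transpose M = M"
  shows "((\<lambda>w. ((M::real^'n^'n) *v w) \<bullet> w) has_derivative (\<lambda>d. 2 * ((M *v w) \<bullet> d))) (at w)"
proof -
  have "((\<lambda>w. (M *v w) \<bullet> w) has_derivative (\<lambda>d. (M *v w) \<bullet> d + (M *v d) \<bullet> w)) (at w)"
    by (rule has_derivative_inner[OF bounded_linear.has_derivative[OF matrix_vector_mul_bounded_linear has_derivative_ident] has_derivative_ident])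
  moreover have "(\<lambda>d. (M *v w) \<bullet> d + (M *v d) \<bullet> w) = (\<lambda>d. 2 * ((M *v w) \<bullet> d))"
    using sym_dot[OF sym] by (auto simp: inner_commute)
  ultimately show ?thesis by simp
qed

lemma tangent:
  fixes g :: "'a::real_normed_vector \<Rightarrow> real"
  assumes cvx: "convex_on UNIV g" and der: "(g has_derivative g') (at x)"
  shows "g y \<ge> g x + g' (y - x)"
proof -
  define phi where "phi t = g (x + t *\<^sub>R (y - x))" for t :: real
  have "convex_on UNIV phi"
  proof (rule convex_onI)
    fix t s r :: real assume "0 < t" "t < 1"
    have "x + ((1 - t) *\<^sub>R s + t *\<^sub>R r) *\<^sub>R (y - x) = (1 - t) *\<^sub>R (x + s *\<^sub>R (y - x)) + t *\<^sub>R (x + r *\<^sub>R (y - x))"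
      by (simp add: algebra_simps)
    then show "phi ((1 - t) *\<^sub>R s + t *\<^sub>R r) \<le> (1 - t) * phi s + t * phi r"
      unfolding phi_def using convex_onD[OF cvx, of t] \<open>0 < t\<close> \<open>t < 1\<close> by simp
  qed simp
  moreover have "(phi has_real_derivative g' (y - x)) (at 0)"
  proof -
    have lin: "bounded_linear g'" using der has_derivative_bounded_linear by blast
    have "((\<lambda>t. x + t *\<^sub>R (y - x)) has_derivative (\<lambda>t. t *\<^sub>R (y - x))) (at 0)"
      by (auto intro!: derivative_eq_intros)
    then have "(phi has_derivative (g' \<circ> (\<lambda>t. t *\<^sub>R (y - x)))) (at 0)"
      unfolding phi_def using der has_derivative_compose[of "\<lambda>t. x + t *\<^sub>R (y - x)" _ 0 UNIV g g'] by (simp add: o_def)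
    moreover have "(g' \<circ> (\<lambda>t. t *\<^sub>R (y - x))) = (\<lambda>t. g' (y - x) * t)"
      using linear_scale[OF bounded_linear.linear[OF lin]] by (auto simp: o_def mult.commute)
    ultimately show ?thesis by (simp add: has_field_derivative_def)
  qed
  ultimately have "phi 1 - phi 0 \<ge> g' (y - x) * (1 - 0)"
    by (intro convex_on_imp_above_tangent[where A=UNIV]) auto
  then show ?thesis unfolding phi_def by simp
qed

lemma grad_mono:
  fixes g :: "'a::real_inner \<Rightarrow> real"
  assumes cvx: "convex_on UNIV g" and der: "\<And>x. (g has_derivative (\<lambda>d. gg x \<bullet> d)) (at x)"
  shows "(gg x - gg y) \<bullet> (x - y) \<ge> 0"
proof -
  have "g y \<ge> g x + gg x \<bullet> (y - x)" by (rule tangent[OF cvx der])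
  moreover have "g x \<ge> g y + gg y \<bullet> (x - y)" by (rule tangent[OF cvx der])
  ultimately show ?thesis by (simp add: inner_diff_left inner_diff_right)
qed

lemma mnorm2_swap: "mnorm2 M (x - y) = mnorm2 M (y - x)"
  unfolding mnorm2_def by (simp add: matrix_vector_mult_diff_distrib inner_diff_left inner_diff_right)

lemma breg_half:
  fixes f :: "real^'m \<Rightarrow> real" and T :: "real^'m^'m"
  assumes spdT: "spd T" and cvx: "convex_on UNIV f"
    and der: "\<And>x. (f has_derivative (\<lambda>d. gf x \<bullet> d)) (at x)"
    and S: "S11 f gf T mu L" and L1: "L \<le> 1"
  shows "f z - f x - gf x \<bullet> (z - x) \<ge> 1/2 * mnorm2 (matrix_inv T) (gf z - gf x)"
proof -
  define g where "g = gf z - gf x"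
  define Ti where "Ti = matrix_inv T"
  define y where "y = z - Ti *v g"
  have inv: "invertible T" using spdT spd_invertible by blast
  have symT: "transpose T = T" using spdT spd_def by blast
  have spdTi: "spd Ti" unfolding Ti_def using spd_inv[OF spdT] .
  have symTi: "transpose Ti = Ti" using spdTi spd_def by blast
  have t1: "f y \<ge> f x + gf x \<bullet> (y - x)" by (rule tangent[OF cvx der])
  have t2: "f y - f z - gf z \<bullet> (y - z) \<le> L / 2 * mnorm2 T (z - y)"
    using S unfolding S11_def bregman_def by blast
  have zy: "z - y = Ti *v g" unfolding y_def by simp
  have m3: "mnorm2 T (z - y) = mnorm2 Ti g"
    unfolding zy mnorm2_def Ti_def using inv_mv(1)[OF inv] by (simp add: inner_commute)
  have nn: "0 \<le> mnorm2 Ti g" using spd_nonneg[OF spdTi] .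
  have "L * mnorm2 Ti g \<le> 1 * mnorm2 Ti g" by (rule mult_right_mono[OF L1 nn])
  then have m4: "L / 2 * mnorm2 T (z - y) \<le> 1/2 * mnorm2 Ti g" unfolding m3 by simp
  have gy: "g \<bullet> (y - z) = - mnorm2 Ti g"
    unfolding y_def mnorm2_def by (simp add: inner_commute)
  have "gf x \<bullet> (y - x) = gf x \<bullet> (y - z) + gf x \<bullet> (z - x)"
    by (simp add: inner_diff_right)
  moreover have "gf z \<bullet> (y - z) = gf x \<bullet> (y - z) + g \<bullet> (y - z)"
    unfolding g_def by (simp add: inner_diff_left)
  ultimately show ?thesis using t1 t2 m4 gy unfolding g_def[symmetric] Ti_def[symmetric] by linarith
qed

lemma cocoercive:
  fixes f :: "real^'m \<Rightarrow> real" and T :: "real^'m^'m"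
  assumes spdT: "spd T" and cvx: "convex_on UNIV f"
    and der: "\<And>x. (f has_derivative (\<lambda>d. gf x \<bullet> d)) (at x)"
    and S: "S11 f gf T mu L" and L1: "L \<le> 1"
  shows "(gf x - gf z) \<bullet> (x - z) \<ge> mnorm2 (matrix_inv T) (gf x - gf z)"
proof -
  have a: "f z - f x - gf x \<bullet> (z - x) \<ge> 1/2 * mnorm2 (matrix_inv T) (gf z - gf x)"
    by (rule breg_half[OF assms])
  have b: "f x - f z - gf z \<bullet> (x - z) \<ge> 1/2 * mnorm2 (matrix_inv T) (gf x - gf z)"
    by (rule breg_half[OF assms])
  have "mnorm2 (matrix_inv T) (gf z - gf x) = mnorm2 (matrix_inv T) (gf x - gf z)"
    by (rule mnorm2_swap)
  with a b show ?thesis by (simp add: inner_diff_left inner_diff_right)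
qed

lemma strong_mono:
  fixes g :: "real^'m \<Rightarrow> real" and M V :: "real^'m^'m"
  assumes sc: "strongly_convex_wrt V mu (\<lambda>v. g v + 1/2 * ((M *v v) \<bullet> v))"
    and symM: "transpose M = M" and symV: "transpose V = V"
    and der: "\<And>x. (g has_derivative (\<lambda>d. gg x \<bullet> d)) (at x)"
  shows "((gg x + M *v x) - (gg y + M *v y)) \<bullet> (x - y) \<ge> mu * mnorm2 V (x - y)"
proof -
  let ?G = "\<lambda>v. g v + 1/2 * ((M *v v) \<bullet> v) - mu / 2 * mnorm2 V v"
  let ?gG = "\<lambda>v. gg v + M *v v - mu *\<^sub>R (V *v v)"
  have cvx: "convex_on UNIV ?G" using sc unfolding strongly_convex_wrt_def .
  have d: "(?G has_derivative (\<lambda>d. ?gG x \<bullet> d)) (at x)" for x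
  proof -
    have "(?G has_derivative (\<lambda>d. gg x \<bullet> d + 1/2 * (2 * ((M *v x) \<bullet> d)) - mu/2 * (2 * ((V *v x) \<bullet> d)))) (at x)"
      unfolding mnorm2_def
      by (intro has_derivative_diff has_derivative_add der has_derivative_mult_right quad_deriv[OF symM] quad_deriv[OF symV])
    then show ?thesis by (simp add: inner_diff_left inner_add_left)
  qed
  have "(?gG x - ?gG y) \<bullet> (x - y) \<ge> 0" by (rule grad_mono[OF cvx d])
  moreover have "?gG x - ?gG y = ((gg x + M *v x) - (gg y + M *v y)) - mu *\<^sub>R (V *v (x - y))"
    by (simp add: matrix_vector_mult_diff_distrib scaleR_diff_right)
  ultimately show ?thesis unfolding mnorm2_def by (simp add: inner_diff_left)
qed

lemma eig_rel:
  assumes spdP: "spd (P::real^'n^'n)" and A: "A = matrix_inv P ** K" and ev: "A *v v = c *s v"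
  shows "K *v v = c *\<^sub>R (P *v v)"
proof -
  have inv: "invertible P" using spdP spd_invertible by blast
  have "P *v (A *v v) = K *v v" unfolding A
    by (simp add: matrix_vector_mul_assoc[symmetric] inv_mv(1)[OF inv])
  then show ?thesis using ev by (simp add: scalar_mult_eq_scaleR matrix_vector_mult_scaleR)
qed

lemma eig_orth:
  assumes spdP: "spd (P::real^'n^'n)" and symK: "transpose K = K"
    and e1: "K *v v1 = c1 *\<^sub>R (P *v v1)" and e2: "K *v v2 = c2 *\<^sub>R (P *v v2)" and ne: "c1 \<noteq> c2"
  shows "(P *v v1) \<bullet> v2 = 0"
proof -
  have symP: "transpose P = P" using spdP spd_def by blast
  have "(K *v v1) \<bullet> v2 = v1 \<bullet> (K *v v2)" by (rule sym_dot[OF symK])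
  then have "c1 * ((P *v v1) \<bullet> v2) = c2 * (v1 \<bullet> (P *v v2))" using e1 e2 by simp
  also have "v1 \<bullet> (P *v v2) = (P *v v1) \<bullet> v2" using sym_dot[OF symP] by simp
  finally have "(c1 - c2) * ((P *v v1) \<bullet> v2) = 0" by (simp add: algebra_simps)
  then show ?thesis using ne by simp
qed

lemma eig_finite:
  assumes spdP: "spd (P::real^'n^'n)" and symK: "transpose K = K" and A: "A = matrix_inv P ** K"
  shows "finite {c. \<exists>v. v \<noteq> 0 \<and> A *v v = c *s v}"
proof (rule ccontr)
  let ?S = "{c. \<exists>v. v \<noteq> 0 \<and> A *v v = c *s v}"
  assume inf: "infinite ?S"
  obtain F where F: "finite F" "card F = Suc CARD('n)" "F \<subseteq> ?S"
    using infinite_arbitrarily_large[OF inf] by blast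
  define ev where "ev c = (SOME v. v \<noteq> 0 \<and> A *v v = c *s v)" for c
  have evp: "ev c \<noteq> 0 \<and> A *v ev c = c *s ev c" if "c \<in> F" for c
    using F(3) that someI_ex[of "\<lambda>v. v \<noteq> 0 \<and> A *v v = c *s v"] unfolding ev_def by blast
  have evK: "K *v ev c = c *\<^sub>R (P *v ev c)" if "c \<in> F" for c
    using eig_rel[OF spdP A] evp[OF that] by blast
  have inj: "inj_on ev F"
  proof (rule inj_onI)
    fix a b assume ab: "a \<in> F" "b \<in> F" "ev a = ev b"
    then have "a *s ev a = b *s ev a" using evp by metis
    then have "(a - b) *\<^sub>R ev a = 0" by (simp add: scalar_mult_eq_scaleR algebra_simps)
    then show "a = b" using evp[OF ab(1)] by simp
  qed
  have orth: "(P *v ev a) \<bullet> ev b = 0" if "a \<in> F" "b \<in> F" "ev a \<noteq> ev b" for a b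
    using eig_orth[OF spdP symK evK[OF that(1)] evK[OF that(2)]] that by metis
  have pos: "(P *v ev a) \<bullet> ev a > 0" if "a \<in> F" for a
    using spdP evp[OF that] unfolding spd_def by blast
  let ?W = "ev ` F"
  have indep: "independent ?W"
  proof
    assume "dependent ?W"
    then obtain u where u: "\<exists>v\<in>?W. u v \<noteq> 0" "(\<Sum>v\<in>?W. u v *\<^sub>R v) = 0"
      using dependent_finite[of ?W] F(1) by auto
    obtain w where w: "w \<in> ?W" "u w \<noteq> 0" using u(1) by blast
    obtain a where a: "a \<in> F" "w = ev a" using w(1) by blast
    have "0 = (\<Sum>v\<in>?W. u v *\<^sub>R v) \<bullet> (P *v w)" using u(2) by simp
    also have "\<dots> = (\<Sum>v\<in>?W. u v * (v \<bullet> (P *v w)))" by (simp add: inner_sum_left)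
    also have "\<dots> = u w * (w \<bullet> (P *v w))"
    proof (rule sum.remove[OF finite_imageI[OF F(1)] w(1), THEN trans])
      have "(\<Sum>v\<in>?W - {w}. u v * (v \<bullet> (P *v w))) = 0"
      proof (rule sum.neutral, rule ballI)
        fix v assume v: "v \<in> ?W - {w}"
        then obtain b where b: "b \<in> F" "v = ev b" by blast
        have "(P *v ev a) \<bullet> ev b = 0" using orth[OF a(1) b(1)] v a b by auto
        then have "v \<bullet> (P *v w) = 0" using a b by (simp add: inner_commute)
        then show "u v * (v \<bullet> (P *v w)) = 0" by simp
      qed
      then show "u w * (w \<bullet> (P *v w)) + (\<Sum>v\<in>?W - {w}. u v * (v \<bullet> (P *v w))) = u w * (w \<bullet> (P *v w))" by simp
    qed
    finally have "u w * (w \<bullet> (P *v w)) = 0" by simp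
    moreover have "w \<bullet> (P *v w) > 0" using pos[OF a(1)] a(2) by (simp add: inner_commute)
    ultimately show False using w(2) by simp
  qed
  have "card ?W = Suc CARD('n)" using card_image[OF inj] F(2) by simp
  moreover have "card ?W \<le> DIM(real^'n)" using independent_bound[OF indep] by blast
  ultimately show False by simp
qed

lemma cont_mn: "continuous_on S (\<lambda>x. mnorm2 (M::real^'k^'k) ((C::real^'m^'k) *v x))"
  unfolding mnorm2_def
  by (intro continuous_intros bounded_linear.continuous_on[OF matrix_vector_mul_bounded_linear])

lemma mn_scale: "mnorm2 (M::real^'k^'k) ((C::real^'m^'k) *v (s *\<^sub>R x)) = s^2 * mnorm2 M (C *v x)"
  unfolding mnorm2_def by (simp add: matrix_vector_mult_scaleR power2_eq_square)

lemma mn_id: "mnorm2 M x = mnorm2 M (mat 1 *v x)" by simp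

lemma transpose_minus: "transpose ((A::real^'n^'m) - C) = transpose A - transpose C"
  by (simp add: transpose_def vec_eq_iff)

lemma rayleigh:
  fixes B :: "real^'m^'n" and IQ :: "real^'n^'n" and IV :: "real^'m^'m"
  assumes spdQ: "spd IQ" and spdV: "spd IV" and rk: "rank B = CARD('n)"
  shows "0 \<le> lambda_max (matrix_inv IQ ** B ** matrix_inv IV ** transpose B)
     \<and> (\<forall>y. mnorm2 (matrix_inv IQ) (B *v y) \<le> lambda_max (matrix_inv IQ ** B ** matrix_inv IV ** transpose B) * mnorm2 IV y)"
proof -
  define Q where "Q = matrix_inv IQ"
  define Vi where "Vi = matrix_inv IV"
  define A where "A = Q ** B ** Vi ** transpose B"
  define K where "K = B ** Vi ** transpose B"
  define q where "q x = mnorm2 Q (B *v x)" for x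
  define R where "R x = q x / mnorm2 IV x" for x
  have spdQi: "spd Q" unfolding Q_def by (rule spd_inv[OF spdQ])
  have symQ: "transpose Q = Q" using spdQi spd_def by blast
  have spdVi: "spd Vi" unfolding Vi_def by (rule spd_inv[OF spdV])
  have symVi: "transpose Vi = Vi" using spdVi spd_def by blast
  have symV: "transpose IV = IV" using spdV spd_def by blast
  have invV: "invertible IV" using spdV spd_invertible by blast
  have invQ: "invertible Q" using spdQi spd_invertible by blast
  have symK: "transpose K = K" unfolding K_def by (simp add: matrix_transpose_mul symVi matrix_mul_assoc)
  have AK: "A = matrix_inv IQ ** K" unfolding A_def K_def Q_def by (simp add: matrix_mul_assoc)
  have fin: "finite {c. \<exists>v. v \<noteq> 0 \<and> A *v v = c *s v}" by (rule eig_finite[OF spdQ symK AK])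
  have Vpos: "mnorm2 IV x > 0" if "x \<noteq> 0" for x using spdV that unfolding spd_def mnorm2_def by blast
  have qnn: "q x \<ge> 0" for x unfolding q_def by (rule spd_nonneg[OF spdQi])
  have cont: "continuous_on (sphere 0 1) R"
    unfolding R_def q_def
    apply (intro continuous_on_divide cont_mn)
    apply (subst mn_id) apply (rule cont_mn)
    using Vpos by (auto simp: mn_id[symmetric]) (metis less_irrefl norm_zero zero_neq_one)
  obtain x0 where x0: "x0 \<in> sphere (0::real^'m) 1" "\<forall>y\<in>sphere 0 1. R y \<le> R x0"
    using continuous_attains_sup[OF compact_sphere _ cont] by auto
  define c where "c = R x0"
  have x0nz: "x0 \<noteq> 0" using x0(1) by auto
  have qc0: "q x0 = c * mnorm2 IV x0" unfolding c_def R_def using Vpos[OF x0nz] by simp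
  have bound: "q x \<le> c * mnorm2 IV x" for x
  proof (cases "x = 0")
    case True then show ?thesis unfolding q_def mnorm2_def by simp
  next
    case False
    define y where "y = (1 / norm x) *\<^sub>R x"
    have "y \<in> sphere 0 1" unfolding y_def using False by simp
    then have "R y \<le> c" using x0(2) c_def by blast
    moreover have "R y = R x" unfolding R_def q_def y_def
      using mn_scale[of Q B "1/norm x" x] mn_scale[of IV "mat 1" "1/norm x" x] False by simp
    ultimately have "q x / mnorm2 IV x \<le> c" unfolding R_def by simp
    then show ?thesis using Vpos[OF False] by (simp add: divide_le_eq)
  qed
  have c0: "c \<ge> 0" unfolding c_def R_def using qnn Vpos[OF x0nz] by simp
  define Phi where "Phi = c *\<^sub>R IV - transpose B ** Q ** B"
  have Phiv: "Phi *v x = c *\<^sub>R (IV *v x) - transpose B *v (Q *v (B *v x))" for x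
    unfolding Phi_def by (simp only: matrix_vector_mult_diff_rdistrib scaleR_matrix_vector_assoc matrix_vector_mul_assoc matrix_mul_assoc)
  have BT: "(transpose B *v w) \<bullet> x = w \<bullet> (B *v x)" for w x
    using dot_transpose[of "transpose B" w x] unfolding transpose_transpose .
  have Phiq: "(Phi *v x) \<bullet> x = c * mnorm2 IV x - q x" for x
    unfolding Phiv q_def mnorm2_def by (simp add: inner_diff_left dot_lmul_matrix)
  have symPhi: "transpose Phi = Phi" unfolding Phi_def
    by (simp add: transpose_minus transpose_scalar symV matrix_transpose_mul symQ matrix_mul_assoc)
  have psd: "0 \<le> (Phi *v x) \<bullet> x" for x unfolding Phiq using bound[of x] by simp
  have "Phi *v x0 = 0" by (rule psd_zero[OF symPhi psd]) (simp add: Phiq qc0)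
  then have eq: "transpose B *v (Q *v (B *v x0)) = c *\<^sub>R (IV *v x0)" unfolding Phiv by simp
  define v where "v = Q *v (B *v x0)"
  have Av: "A *v v = c *s v"
  proof -
    have "A *v v = Q *v (B *v (Vi *v (transpose B *v (Q *v (B *v x0)))))"
      unfolding A_def v_def by (simp only: matrix_vector_mul_assoc matrix_mul_assoc)
    also have "\<dots> = c *\<^sub>R v" unfolding eq v_def Vi_def
      by (simp add: matrix_vector_mult_scaleR inv_mv(2)[OF invV])
    finally show ?thesis by (simp add: scalar_mult_eq_scaleR)
  qed
  have vnz: "v \<noteq> 0"
  proof
    assume "v = 0"
    then have Bx0: "B *v x0 = 0" unfolding v_def using spd_inj[OF spdQi] by blast
    then have "c = 0" using qc0 Vpos[OF x0nz] unfolding q_def mnorm2_def by simp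
    then have "q x = 0" for x using bound[of x] qnn[of x] by simp
    then have "B *v x = 0" for x using spdQi unfolding q_def spd_def mnorm2_def
      by (metis less_irrefl)
    then have "B = 0" by (simp add: matrix_eq)
    then have "rank B = 0" by simp
    then show False using rk by simp
  qed
  have cS: "c \<in> {c. \<exists>v. v \<noteq> 0 \<and> A *v v = c *s v}" using Av vnz by blast
  have lam: "c \<le> lambda_max A" unfolding lambda_max_def using Max_ge[OF fin cS] .
  have "q y \<le> lambda_max A * mnorm2 IV y" for y
    using bound[of y] mult_right_mono[OF lam spd_nonneg[OF spdV, of y]] by linarith
  then show ?thesis using lam c0 unfolding A_def q_def Q_def Vi_def by auto
qed

lemma shift_quad_deriv:
  assumes sym: "transpose M = M"
  shows "((\<lambda>w. mnorm2 (M::real^'n^'n) (w - a + b)) has_derivative (\<lambda>d. 2 * ((M *v (w - a + b)) \<bullet> d))) (at w)"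
proof -
  have "((\<lambda>w. w - a + b) has_derivative (\<lambda>d. d)) (at w)"
    by (auto intro!: derivative_eq_intros)
  from has_derivative_compose[OF this quad_deriv[OF sym]]
  show ?thesis unfolding mnorm2_def by simp
qed

lemma mv_neg: "(M::real^'n^'m) *v (- x) = - (M *v x)"
  using matrix_vector_mult_diff_distrib[of M 0 x] by simp

lemma dot_vmul: "((B::real^'m^'n) *v x) \<bullet> y = x \<bullet> (y v* B)"
  by (metis dot_transpose transpose_matrix_vector)

lemma mn_expand:
  assumes sym: "transpose M = M"
  shows "mnorm2 (M::real^'n^'n) (a - b) = mnorm2 M a - 2 * ((M *v b) \<bullet> a) + mnorm2 M b"
proof -
  have "(M *v a) \<bullet> b = (M *v b) \<bullet> a" using sym_dot[OF sym] by (simp add: inner_commute)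
  then show ?thesis unfolding mnorm2_def
    by (simp add: matrix_vector_mult_diff_distrib inner_diff_left inner_diff_right)
qed

lemma mn_neg: "mnorm2 M (- x) = mnorm2 M x"
  using mn_scale[of M "mat 1" "-1" x] by simp

lemma quad_young':
  assumes sym: "transpose M = M" and psd: "\<And>x. 0 \<le> ((M::real^'n^'n) *v x) \<bullet> x"
  shows "- 2 * ((M *v a) \<bullet> b) \<le> (M *v a) \<bullet> a + (M *v b) \<bullet> b"
proof -
  have "2 * ((M *v a) \<bullet> (- b)) \<le> (M *v a) \<bullet> a + (M *v (- b)) \<bullet> (- b)"
    by (rule quad_young[OF sym psd])
  moreover have "(M *v (- b)) \<bullet> (- b) = (M *v b) \<bullet> b" using mn_neg[of M b] unfolding mnorm2_def .
  ultimately show ?thesis by simp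
qed

lemma err_bound:
  assumes spdP: "spd (P::real^'n^'n)" and D: "0 \<le> D" and a: "0 \<le> a"
    and r: "mnorm2 (matrix_inv P) r \<le> a * D"
  shows "2 * al * (r \<bullet> w) \<le> D + al^2 * a * mnorm2 P w"
proof -
  define Pi where "Pi = matrix_inv P"
  have spdPi: "spd Pi" unfolding Pi_def by (rule spd_inv[OF spdP])
  have symPi: "transpose Pi = Pi" using spdPi spd_def by blast
  have symP: "transpose P = P" using spdP spd_def by blast
  have inv: "invertible P" using spdP spd_invertible by blast
  have psd: "0 \<le> (Pi *v x) \<bullet> x" for x using spd_nonneg[OF spdPi] unfolding mnorm2_def .
  have e1: "(Pi *v r) \<bullet> (P *v w) = r \<bullet> w"
    using sym_dot[OF symPi, of r "P *v w"] inv_mv(2)[OF inv] unfolding Pi_def by simp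
  have e2: "(Pi *v (P *v w)) \<bullet> (P *v w) = mnorm2 P w"
    using inv_mv(2)[OF inv] unfolding Pi_def mnorm2_def by (simp add: inner_commute)
  have cs: "(r \<bullet> w)^2 \<le> mnorm2 Pi r * mnorm2 P w"
    using quad_cs[OF symPi psd, of r "P *v w"] unfolding e1 e2 mnorm2_def .
  have mP: "0 \<le> mnorm2 P w" by (rule spd_nonneg[OF spdP])
  have mPi: "0 \<le> mnorm2 Pi r" by (rule spd_nonneg[OF spdPi])
  have "(r \<bullet> w)^2 \<le> a * D * mnorm2 P w"
    using cs mult_right_mono[OF r[unfolded Pi_def[symmetric]] mP] by linarith
  then have "4 * al^2 * (r \<bullet> w)^2 \<le> 4 * al^2 * (a * D * mnorm2 P w)"
    by (intro mult_left_mono) auto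
  moreover have "(2 * al * (r \<bullet> w))^2 = 4 * al^2 * (r \<bullet> w)^2" by (simp add: power_mult_distrib)
  ultimately have sq: "(2 * al * (r \<bullet> w))^2 \<le> 4 * al^2 * a * D * mnorm2 P w"
    by (simp add: mult.assoc)
  have amgm: "4 * al^2 * a * D * mnorm2 P w \<le> (D + al^2 * a * mnorm2 P w)^2"
  proof -
    have "0 \<le> (D - al^2 * a * mnorm2 P w)^2" by simp
    moreover have "(D + al^2 * a * mnorm2 P w)^2 - 4 * al^2 * a * D * mnorm2 P w = (D - al^2 * a * mnorm2 P w)^2"
      by (simp add: power2_eq_square algebra_simps)
    ultimately show ?thesis by linarith
  qed
  have rhs: "0 \<le> D + al^2 * a * mnorm2 P w" using D a mP by simp
  show ?thesis
    using sq amgm rhs by (meson order_trans power2_le_imp_le)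
qed

lemma final_arith:
  fixes al muf muh L mu X Y T e1 e2 mdu mdp mDu mDp E0 E1 :: real
  assumes al: "al > 0" and mdu: "mdu \<ge> 0" and mdp: "mdp \<ge> 0"
    and mu1: "mu \<le> muf" and mu2: "mu \<le> muh - al * L" and mu0: "mu > 0"
    and XY: "X + Y = - al * T + al * e1 + al * e2"
    and T: "2 * T \<ge> muf * mdu + muh * mdp"
    and e: "2 * al * e1 + 2 * al * e2 \<le> mDu + mDp + al^2 * L * mdp"
    and E0: "E0 = 1/2 * (mdu - 2 * X + mDu) + 1/2 * (mdp - 2 * Y + mDp)"
    and E1: "E1 = 1/2 * mdu + 1/2 * mdp"
  shows "E1 \<le> 1 / (1 + al * mu) * E0"
proof -
  have aT: "al * (2 * T) \<ge> al * (muf * mdu + muh * mdp)" using T al by (intro mult_left_mono) auto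
  have "E0 - E1 = - X - Y + 1/2 * mDu + 1/2 * mDp" using E0 E1 by (simp add: field_simps)
  also have "\<dots> = al * T - al * e1 - al * e2 + 1/2 * mDu + 1/2 * mDp" using XY by linarith
  finally have d: "2 * (E0 - E1) = al * (2 * T) - (2 * al * e1 + 2 * al * e2) + mDu + mDp" by (simp add: algebra_simps)
  have "2 * (E0 - E1) \<ge> al * (muf * mdu + muh * mdp) - al^2 * L * mdp" using d aT e by linarith
  also have "al * (muf * mdu + muh * mdp) - al^2 * L * mdp = al * muf * mdu + al * (muh - al * L) * mdp"
    by (simp add: algebra_simps power2_eq_square)
  also have "\<dots> \<ge> al * mu * mdu + al * mu * mdp"
  proof -
    have "al * mu * mdu \<le> al * muf * mdu" using al mu1 mdu by (intro mult_right_mono mult_left_mono) auto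
    moreover have "al * mu * mdp \<le> al * (muh - al * L) * mdp" using al mu2 mdp by (intro mult_right_mono mult_left_mono) auto
    ultimately show ?thesis by linarith
  qed
  finally have f1: "2 * (E0 - E1) \<ge> al * mu * (mdu + mdp)" by (simp add: algebra_simps)
  define P where "P = al * mu * (mdu + mdp)"
  have f2: "(1 + al * mu) * E1 = (mdu + mdp) / 2 + P / 2"
    unfolding E1 P_def by (simp add: field_simps)
  have f3: "E1 = (mdu + mdp) / 2" unfolding E1 by simp
  have "E0 \<ge> (1 + al * mu) * E1" unfolding f2 using f1 f3 unfolding P_def[symmetric] by argo
  moreover have "1 + al * mu > 0" using al mu0 by (simp add: add_pos_pos)
  ultimately show ?thesis by (simp add: field_simps)
qed

theorem theorem5p6:
  fixes B :: "real^'m^'n"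
    and f :: "real^'m \<Rightarrow> real" and gf :: "real^'m \<Rightarrow> real^'m"
    and h :: "real^'n \<Rightarrow> real" and gh :: "real^'n \<Rightarrow> real^'n"
    and TU IV :: "real^'m^'m" and TP IQ :: "real^'n^'n"
    and ustar :: "real^'m" and pstar :: "real^'n"
    and mu_h L_h mu_f L_f mu_fB mu_hB L_hB L_eU :: real
    and u :: "nat \<Rightarrow> real^'m" and p :: "nat \<Rightarrow> real^'n" and alpha :: "nat \<Rightarrow> real"
  assumes dims: "CARD('n) \<le> CARD('m)"
    and fullrank: "rank B = CARD('n)"
    and f_conv: "convex_on UNIV f" and h_conv: "convex_on UNIV h"
    and f_grad: "\<And>x. (f has_derivative (\<lambda>d. gf x \<bullet> d)) (at x)"
    and h_grad: "\<And>x. (h has_derivative (\<lambda>d. gh x \<bullet> d)) (at x)"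
    and gf_cont: "continuous_on UNIV gf" and gh_cont: "continuous_on UNIV gh"
    and gf_lip: "\<exists>L. \<forall>x y. norm (gf x - gf y) \<le> L * norm (x - y)"
    and gh_lip: "\<exists>L. \<forall>x y. norm (gh x - gh y) \<le> L * norm (x - y)"
    and saddle1: "gf ustar + transpose B *v pstar = 0"
    and saddle2: "B *v ustar = gh pstar"
    and spd_TU: "spd TU" and spd_IV: "spd IV" and spd_TP: "spd TP" and spd_IQ: "spd IQ"
    and h_S11: "S11 h gh TP mu_h L_h" and L_h_le: "L_h \<le> 1"
    and f_S11: "S11 f gf TU mu_f L_f" and L_f_le: "L_f \<le> 1"
    and fB_sc: "strongly_convex_wrt IV mu_fB
                  (\<lambda>v. f v + 1/2 * (((transpose B ** matrix_inv TP ** B) *v v) \<bullet> v))"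
    and mu_fB_pos: "mu_fB > 0"
    and hB_sc: "strongly_convex_wrt IQ mu_hB
                  (\<lambda>q. h q + 1/2 * (((B ** matrix_inv TU ** transpose B) *v q) \<bullet> q))"
    and mu_hB_pos: "mu_hB > 0"
    and L_hB_nonneg: "L_hB \<ge> 0"
    and L_hB_lip: "\<And>p1 p2. mnorm2 (matrix_inv IQ)
                      ((gh p1 + (B ** matrix_inv TU ** transpose B) *v p1)
                       - (gh p2 + (B ** matrix_inv TU ** transpose B) *v p2))
                    \<le> L_hB\<^sup>2 * mnorm2 IQ (p1 - p2)"
    and L_eU_nonneg: "L_eU \<ge> 0"
    and L_eU_lip: "\<And>u1 u2. mnorm2 IV ((u1 - matrix_inv TU *v gf u1) - (u2 - matrix_inv TU *v gf u2))
                    \<le> L_eU\<^sup>2 * mnorm2 IV (u1 - u2)"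
    and step: "\<And>k. p (Suc k) = p k - alpha k *s (matrix_inv IQ *v
                      (gh (p k) - B *v (u k - matrix_inv TU *v (gf (u k) + transpose B *v p k))))"
    and argmin: "\<And>k v.
        (let ftil = (\<lambda>w. f w + 1/2 * (((transpose B ** matrix_inv TP ** B) *v w) \<bullet> w)
              + 1 / (2 * alpha k) * mnorm2 IV (w - u k + alpha k *s (matrix_inv IV *v (transpose B *v
                    (p (Suc k) - matrix_inv TP *v gh (p (Suc k)))))))
         in ftil (u (Suc k)) \<le> ftil v)"
  defines "E \<equiv> (\<lambda>uu pp. 1/2 * mnorm2 IV (uu - ustar) + 1/2 * mnorm2 IQ (pp - pstar))"
    and "LSQ2 \<equiv> L_hB\<^sup>2 + L_eU\<^sup>2 * lambda_max (matrix_inv IQ ** B ** matrix_inv IV ** transpose B)"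
  shows "(\<forall>k. 0 < alpha k \<and> alpha k < mu_hB / LSQ2 \<longrightarrow>
            E (u (Suc k)) (p (Suc k))
              \<le> 1 / (1 + alpha k * min mu_fB (mu_hB - alpha k * LSQ2)) * E (u k) (p k))
       \<and> (\<forall>k. alpha k = 0.5 * mu_hB / LSQ2 \<longrightarrow>
            E (u (Suc k)) (p (Suc k))
              \<le> 1 / (1 + 0.5 * mu_hB * min mu_fB (mu_hB / 2) / LSQ2) * E (u k) (p k))"
proof -
  define TUi where "TUi = matrix_inv TU"
  define TPi where "TPi = matrix_inv TP"
  define IVi where "IVi = matrix_inv IV"
  define IQi where "IQi = matrix_inv IQ"
  define K1 where "K1 = transpose B ** matrix_inv TP ** B"
  define K2 where "K2 = B ** matrix_inv TU ** transpose B"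
  define lam where "lam = lambda_max (matrix_inv IQ ** B ** matrix_inv IV ** transpose B)"
  define hB where "hB q = gh q + K2 *v q" for q
  define eU where "eU w = w - TUi *v gf w" for w
  have symTU: "transpose TU = TU" using spd_TU spd_def by blast
  have symTP: "transpose TP = TP" using spd_TP spd_def by blast
  have symIV: "transpose IV = IV" using spd_IV spd_def by blast
  have symIQ: "transpose IQ = IQ" using spd_IQ spd_def by blast
  have spdTUi: "spd TUi" unfolding TUi_def by (rule spd_inv[OF spd_TU])
  have spdTPi: "spd TPi" unfolding TPi_def by (rule spd_inv[OF spd_TP])
  have spdIVi: "spd IVi" unfolding IVi_def by (rule spd_inv[OF spd_IV])
  have spdIQi: "spd IQi" unfolding IQi_def by (rule spd_inv[OF spd_IQ])
  have symTUi: "transpose TUi = TUi" using spdTUi spd_def by blast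
  have symTPi: "transpose TPi = TPi" using spdTPi spd_def by blast
  have invIV: "invertible IV" using spd_IV spd_invertible by blast
  have invIQ: "invertible IQ" using spd_IQ spd_invertible by blast
  have psdTUi: "0 \<le> (TUi *v x) \<bullet> x" for x using spd_nonneg[OF spdTUi] unfolding mnorm2_def .
  have psdTPi: "0 \<le> (TPi *v x) \<bullet> x" for x using spd_nonneg[OF spdTPi] unfolding mnorm2_def .
  have symK1: "transpose K1 = K1" unfolding K1_def
    by (simp add: matrix_transpose_mul symTPi[unfolded TPi_def] matrix_mul_assoc)
  have symK2: "transpose K2 = K2" unfolding K2_def
    by (simp add: matrix_transpose_mul symTUi[unfolded TUi_def] matrix_mul_assoc)
  have BT: "(transpose B *v w) \<bullet> x = w \<bullet> (B *v x)" for w x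
    using dot_transpose[of "transpose B" w x] unfolding transpose_transpose .
  have ray: "0 \<le> lam" "\<And>y. mnorm2 IQi (B *v y) \<le> lam * mnorm2 IV y"
    using rayleigh[OF spd_IQ spd_IV fullrank] unfolding lam_def IQi_def by auto
  have LSQ2_eq: "LSQ2 = L_hB^2 + L_eU^2 * lam" unfolding LSQ2_def lam_def ..
  have smf: "((gf x + K1 *v x) - (gf y + K1 *v y)) \<bullet> (x - y) \<ge> mu_fB * mnorm2 IV (x - y)" for x y
    using strong_mono[OF fB_sc[folded K1_def] symK1 symIV f_grad] .
  have smh: "(hB x - hB y) \<bullet> (x - y) \<ge> mu_hB * mnorm2 IQ (x - y)" for x y
    using strong_mono[OF hB_sc[folded K2_def] symK2 symIQ h_grad] unfolding hB_def .
  have cof: "(gf x - gf z) \<bullet> (x - z) \<ge> mnorm2 TUi (gf x - gf z)" for x z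
    unfolding TUi_def by (rule cocoercive[OF spd_TU f_conv f_grad f_S11 L_f_le])
  have coh: "(gh x - gh z) \<bullet> (x - z) \<ge> mnorm2 TPi (gh x - gh z)" for x z
    unfolding TPi_def by (rule cocoercive[OF spd_TP h_conv h_grad h_S11 L_h_le])
  have hlip: "mnorm2 IQi (hB p1 - hB p2) \<le> L_hB\<^sup>2 * mnorm2 IQ (p1 - p2)" for p1 p2
    using L_hB_lip[of p1 p2] unfolding IQi_def hB_def K2_def .
  have elip: "mnorm2 IV (eU u1 - eU u2) \<le> L_eU\<^sup>2 * mnorm2 IV (u1 - u2)" for u1 u2
    using L_eU_lip[of u1 u2] unfolding TUi_def eU_def .
  have LhB_pos: "L_hB > 0"
  proof (rule ccontr)
    assume "\<not> L_hB > 0"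
    then have L0: "L_hB = 0" using L_hB_nonneg by simp
    obtain x :: "real^'n" where nx: "norm x = 1" using vector_choose_size[of 1] by auto
    then have xnz: "x \<noteq> 0" by auto
    have "mnorm2 IQi (hB x - hB 0) \<le> 0" using hlip[of x 0] L0 by simp
    then have "mnorm2 IQi (hB x - hB 0) = 0" using spd_nonneg[OF spdIQi] by (meson order_antisym)
    then have z: "hB x - hB 0 = 0" using spdIQi unfolding spd_def mnorm2_def by (metis less_irrefl)
    have "(hB x - hB 0) \<bullet> (x - 0) \<ge> mu_hB * mnorm2 IQ (x - 0)" by (rule smh)
    moreover have mp: "mnorm2 IQ x > 0" using spd_IQ xnz unfolding spd_def mnorm2_def by blast
    moreover have "mu_hB * mnorm2 IQ x > 0" using mu_hB_pos mp by simp
    ultimately show False using z by simp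
  qed
  have LSQ2_pos: "LSQ2 > 0" unfolding LSQ2_eq using LhB_pos ray(1)
    by (simp add: add_pos_nonneg)
  have main: "E (u (Suc k)) (p (Suc k)) \<le> 1 / (1 + alpha k * min mu_fB (mu_hB - alpha k * LSQ2)) * E (u k) (p k)"
    if al0: "0 < alpha k" and al1: "alpha k < mu_hB / LSQ2" for k
  proof -
    define al where "al = alpha k"
    define u0 where "u0 = u k"
    define u1 where "u1 = u (Suc k)"
    define p0 where "p0 = p k"
    define p1 where "p1 = p (Suc k)"
    define du where "du = u1 - ustar"
    define dp where "dp = p1 - pstar"
    define Du where "Du = u1 - u0"
    define Dp where "Dp = p1 - p0"
    define G where "G = gf u1 - gf ustar"
    define H where "H = gh p1 - gh pstar"
    have alp: "al > 0" using al0 al_def by simp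
    have alL: "al * LSQ2 < mu_hB" using al1 LSQ2_pos unfolding al_def by (simp add: field_simps)
    have alne: "al \<noteq> 0" using alp by simp
    define X where "X = (IV *v Du) \<bullet> du"
    define Y where "Y = (IQ *v Dp) \<bullet> dp"
    define Su where "Su = ((gf u1 + K1 *v u1) - (gf ustar + K1 *v ustar)) \<bullet> du"
    define Sp where "Sp = (hB p1 - hB pstar) \<bullet> dp"
    define cu where "cu = dp \<bullet> (B *v du)"
    define a3 where "a3 = (TPi *v H) \<bullet> (B *v du)"
    define a6 where "a6 = (TUi *v G) \<bullet> (transpose B *v dp)"
    define r1 where "r1 = hB p1 - hB p0"
    define r2 where "r2 = B *v (eU u0 - eU u1)"
    define d0 where "d0 = al *s (IVi *v (transpose B *v (p1 - TPi *v gh p1)))"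
    define ftil where "ftil w = f w + 1/2 * ((K1 *v w) \<bullet> w) + 1 / (2 * al) * mnorm2 IV (w - u0 + d0)" for w
    have fmin: "ftil u1 \<le> ftil v" for v
      using argmin[of k v] unfolding Let_def ftil_def d0_def al_def u0_def u1_def p1_def K1_def TPi_def IVi_def
      by simp
    have fder: "(ftil has_derivative (\<lambda>d. gf u1 \<bullet> d + 1/2 * (2 * ((K1 *v u1) \<bullet> d)) + 1 / (2 * al) * (2 * ((IV *v (u1 - u0 + d0)) \<bullet> d)))) (at u1)"
      unfolding ftil_def
      by (intro has_derivative_add f_grad has_derivative_mult_right quad_deriv[OF symK1] shift_quad_deriv[OF symIV])
    have "(\<lambda>d. gf u1 \<bullet> d + 1/2 * (2 * ((K1 *v u1) \<bullet> d)) + 1 / (2 * al) * (2 * ((IV *v (u1 - u0 + d0)) \<bullet> d))) = (\<lambda>v. 0)"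
      by (rule differential_zero_maxmin[of u1 UNIV ftil, OF _ _ fder]) (use fmin in auto)
    then have z1: "gf u1 \<bullet> du + (K1 *v u1) \<bullet> du + 1 / al * ((IV *v (u1 - u0 + d0)) \<bullet> du) = 0"
      by (drule_tac fun_cong[where x=du]) simp
    have IVd0: "IV *v d0 = al *\<^sub>R (transpose B *v (p1 - TPi *v gh p1))"
      unfolding d0_def IVi_def by (simp add: scalar_mult_eq_scaleR matrix_vector_mult_scaleR inv_mv(1)[OF invIV])
    have "(IV *v (u1 - u0 + d0)) \<bullet> du = X + al * ((p1 - TPi *v gh p1) \<bullet> (B *v du))"
      unfolding X_def Du_def by (simp add: matrix_vector_right_distrib inner_add_left IVd0 dot_lmul_matrix)
    with z1 have z2: "gf u1 \<bullet> du + (K1 *v u1) \<bullet> du + 1 / al * (X + al * ((p1 - TPi *v gh p1) \<bullet> (B *v du))) = 0"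
      by simp
    then have "al * (gf u1 \<bullet> du + (K1 *v u1) \<bullet> du) + X + al * ((p1 - TPi *v gh p1) \<bullet> (B *v du)) = 0"
      using alne by (simp add: field_simps)
    then have Xa: "X = - al * ((gf u1 + K1 *v u1) \<bullet> du + (p1 - TPi *v gh p1) \<bullet> (B *v du))"
      by (simp add: inner_add_left algebra_simps)
    have gfs: "gf ustar = - (transpose B *v pstar)" using saddle1 by (simp add: eq_neg_iff_add_eq_0)
    have K1s: "K1 *v ustar = transpose B *v (TPi *v gh pstar)"
      unfolding K1_def TPi_def using saddle2 by (simp add: matrix_vector_mul_assoc[symmetric])
    have "(gf ustar + K1 *v ustar) \<bullet> du = (TPi *v gh pstar - pstar) \<bullet> (B *v du)"
      unfolding gfs K1s by (simp add: inner_add_left inner_diff_left dot_lmul_matrix)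
    then have "(gf u1 + K1 *v u1) \<bullet> du + (p1 - TPi *v gh p1) \<bullet> (B *v du) = Su + cu - a3"
      unfolding Su_def cu_def a3_def dp_def H_def
      by (simp add: inner_diff_left inner_add_left matrix_vector_mult_diff_distrib algebra_simps)
    with Xa have Xf: "X = - al * (Su + cu - a3)" by simp
    define W0 where "W0 = gh p0 - B *v (u0 - TUi *v (gf u0 + transpose B *v p0))"
    have p1e: "p1 = p0 - al *s (IQi *v W0)"
      using step[of k] unfolding p1_def p0_def al_def IQi_def W0_def TUi_def u0_def .
    have "IQ *v Dp = - (al *\<^sub>R W0)"
      unfolding Dp_def using p1e
      by (simp add: scalar_mult_eq_scaleR matrix_vector_mult_diff_distrib matrix_vector_mult_scaleR mv_neg
          inv_mv(1)[OF invIQ, folded IQi_def])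
    then have Ya: "Y = - al * (W0 \<bullet> dp)" unfolding Y_def by simp
    have K2v: "K2 *v q = B *v (TUi *v (transpose B *v q))" for q
      unfolding K2_def TUi_def by (simp only: matrix_vector_mul_assoc matrix_mul_assoc)
    have W0e: "W0 = hB p0 - B *v eU u0"
      unfolding W0_def hB_def eU_def K2v
      by (simp add: matrix_vector_mult_diff_distrib matrix_vector_right_distrib algebra_simps)
    have hBs: "hB pstar = B *v eU ustar"
      unfolding hB_def eU_def K2v gfs saddle2[symmetric]
      by (simp add: matrix_vector_mult_diff_distrib mv_neg matrix_vector_right_distrib)
    have "W0 \<bullet> dp = Sp - cu + a6 - r1 \<bullet> dp - r2 \<bullet> dp"
    proof -
      have w1: "W0 \<bullet> dp = (hB p1 - hB pstar) \<bullet> dp + (hB pstar) \<bullet> dp - r1 \<bullet> dp - (B *v eU u1) \<bullet> dp - r2 \<bullet> dp"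
        unfolding W0e r1_def r2_def by (simp add: inner_diff_left matrix_vector_mult_diff_distrib)
      have w2: "(hB pstar) \<bullet> dp - (B *v eU u1) \<bullet> dp = - ((eU u1 - eU ustar) \<bullet> (transpose B *v dp))"
        unfolding hBs by (simp add: dot_vmul matrix_vector_mult_diff_distrib inner_diff_left)
      have v1: "eU u1 - eU ustar = du - TUi *v G"
        unfolding eU_def du_def G_def by (simp add: matrix_vector_mult_diff_distrib)
      have v2: "du \<bullet> (transpose B *v dp) = cu" unfolding cu_def by (metis dot_transpose inner_commute)
      have w3: "(eU u1 - eU ustar) \<bullet> (transpose B *v dp) = cu - a6"
        unfolding v1 a6_def by (simp only: inner_diff_left v2)
      show ?thesis using w1 w2 w3 unfolding Sp_def by linarith
    qed
    with Ya have Yf: "Y = - al * (Sp - cu + a6) + al * (r1 \<bullet> dp) + al * (r2 \<bullet> dp)"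
      by (simp add: algebra_simps)
    have Su_ge: "Su \<ge> mu_fB * mnorm2 IV du" unfolding Su_def du_def by (rule smf)
    have Sp_ge: "Sp \<ge> mu_hB * mnorm2 IQ dp" unfolding Sp_def dp_def by (rule smh)
    have Su_eq: "Su = G \<bullet> du + (K1 *v du) \<bullet> du"
      unfolding Su_def G_def du_def by (simp add: matrix_vector_mult_diff_distrib inner_diff_left algebra_simps)
    have Sp_eq: "Sp = H \<bullet> dp + (K2 *v dp) \<bullet> dp"
      unfolding Sp_def H_def dp_def hB_def by (simp add: matrix_vector_mult_diff_distrib inner_diff_left algebra_simps)
    have a1_ge: "G \<bullet> du \<ge> mnorm2 TUi G" unfolding G_def du_def by (rule cof)
    have a4_ge: "H \<bullet> dp \<ge> mnorm2 TPi H" unfolding H_def dp_def by (rule coh)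
    have a2_eq: "(K1 *v du) \<bullet> du = mnorm2 TPi (B *v du)"
    proof -
      have "K1 *v du = transpose B *v (TPi *v (B *v du))"
        unfolding K1_def TPi_def by (simp only: matrix_vector_mul_assoc matrix_mul_assoc)
      then show ?thesis unfolding mnorm2_def using BT by simp
    qed
    have a5_eq: "(K2 *v dp) \<bullet> dp = mnorm2 TUi (transpose B *v dp)"
      unfolding K2v mnorm2_def by (rule dot_transpose)
    have Y1: "2 * a3 \<le> mnorm2 TPi H + mnorm2 TPi (B *v du)"
      unfolding a3_def mnorm2_def by (rule quad_young[OF symTPi psdTPi])
    have Y2: "- 2 * a6 \<le> mnorm2 TUi G + mnorm2 TUi (transpose B *v dp)"
      unfolding a6_def mnorm2_def by (rule quad_young'[OF symTUi psdTUi])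
    define T where "T = Su - a3 + Sp + a6"
    have Tge: "2 * T \<ge> mu_fB * mnorm2 IV du + mu_hB * mnorm2 IQ dp"
      unfolding T_def using Su_ge Sp_ge Su_eq Sp_eq a1_ge a4_ge a2_eq a5_eq Y1 Y2 by argo
    have XY: "X + Y = - al * T + al * (r1 \<bullet> dp) + al * (r2 \<bullet> dp)"
      unfolding T_def Xf Yf by (simp add: algebra_simps)
    have mDu: "0 \<le> mnorm2 IV Du" by (rule spd_nonneg[OF spd_IV])
    have mDp: "0 \<le> mnorm2 IQ Dp" by (rule spd_nonneg[OF spd_IQ])
    have e1: "2 * al * (r1 \<bullet> dp) \<le> mnorm2 IQ Dp + al^2 * L_hB^2 * mnorm2 IQ dp"
    proof (rule err_bound[OF spd_IQ mDp])
      show "0 \<le> L_hB^2" by simp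
      show "mnorm2 (matrix_inv IQ) r1 \<le> L_hB^2 * mnorm2 IQ Dp"
        using hlip[of p1 p0] unfolding r1_def Dp_def IQi_def .
    qed
    have e2: "2 * al * (r2 \<bullet> dp) \<le> mnorm2 IV Du + al^2 * (L_eU^2 * lam) * mnorm2 IQ dp"
    proof (rule err_bound[OF spd_IQ mDu])
      show "0 \<le> L_eU^2 * lam" using ray(1) by simp
      have "mnorm2 IQi r2 \<le> lam * mnorm2 IV (eU u0 - eU u1)" unfolding r2_def by (rule ray(2))
      also have "\<dots> \<le> lam * (L_eU^2 * mnorm2 IV (u0 - u1))"
        using elip[of u0 u1] ray(1) by (rule mult_left_mono)
      also have "mnorm2 IV (u0 - u1) = mnorm2 IV Du" unfolding Du_def by (rule mnorm2_swap)
      finally show "mnorm2 (matrix_inv IQ) r2 \<le> L_eU^2 * lam * mnorm2 IV Du"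
        unfolding IQi_def by (simp add: algebra_simps)
    qed
    have esum: "2 * al * (r1 \<bullet> dp) + 2 * al * (r2 \<bullet> dp) \<le> mnorm2 IV Du + mnorm2 IQ Dp + al^2 * LSQ2 * mnorm2 IQ dp"
    proof -
      have "al^2 * LSQ2 * mnorm2 IQ dp = al^2 * L_hB^2 * mnorm2 IQ dp + al^2 * (L_eU^2 * lam) * mnorm2 IQ dp"
        unfolding LSQ2_eq by (simp add: algebra_simps)
      then show ?thesis using e1 e2 by linarith
    qed
    have E0: "E u0 p0 = 1/2 * (mnorm2 IV du - 2 * X + mnorm2 IV Du) + 1/2 * (mnorm2 IQ dp - 2 * Y + mnorm2 IQ Dp)"
    proof -
      have "u0 - ustar = du - Du" "p0 - pstar = dp - Dp" unfolding du_def Du_def dp_def Dp_def by simp_all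
      then show ?thesis unfolding E_def X_def Y_def using mn_expand[OF symIV, of du Du] mn_expand[OF symIQ, of dp Dp]
        by simp
    qed
    have E1: "E u1 p1 = 1/2 * mnorm2 IV du + 1/2 * mnorm2 IQ dp" unfolding E_def du_def dp_def ..
    have mu0: "min mu_fB (mu_hB - al * LSQ2) > 0" using mu_fB_pos alL by simp
    have "E u1 p1 \<le> 1 / (1 + al * min mu_fB (mu_hB - al * LSQ2)) * E u0 p0"
      by (rule final_arith[OF alp spd_nonneg[OF spd_IV] spd_nonneg[OF spd_IQ] _ _ mu0 XY Tge esum E0 E1]) auto
    then show ?thesis unfolding al_def u0_def u1_def p0_def p1_def .
  qed
  show ?thesis
  proof (intro conjI allI impI)
    fix k assume "0 < alpha k \<and> alpha k < mu_hB / LSQ2"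
    then show "E (u (Suc k)) (p (Suc k)) \<le> 1 / (1 + alpha k * min mu_fB (mu_hB - alpha k * LSQ2)) * E (u k) (p k)"
      using main by blast
  next
    fix k assume ak: "alpha k = 0.5 * mu_hB / LSQ2"
    have "0 < alpha k" using ak LSQ2_pos mu_hB_pos by simp
    moreover have "alpha k < mu_hB / LSQ2" using ak LSQ2_pos mu_hB_pos by (simp add: field_simps)
    ultimately have m: "E (u (Suc k)) (p (Suc k)) \<le> 1 / (1 + alpha k * min mu_fB (mu_hB - alpha k * LSQ2)) * E (u k) (p k)"
      by (rule main)
    have "mu_hB - alpha k * LSQ2 = mu_hB / 2" using ak LSQ2_pos by (simp add: field_simps)
    then have "alpha k * min mu_fB (mu_hB - alpha k * LSQ2) = 0.5 * mu_hB * min mu_fB (mu_hB / 2) / LSQ2"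
      using ak by simp
    then show "E (u (Suc k)) (p (Suc k)) \<le> 1 / (1 + 0.5 * mu_hB * min mu_fB (mu_hB / 2) / LSQ2) * E (u k) (p k)"
      using m by simp
  qed
qed

end
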